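(* Let $G$ be an infinite simple graph. Then either $\theta(G)=1$ (which happens exactly when $G$ is asymmetric), or $\theta(G)=\infty$, i.e. for no finite $k$ is every vertex coloring of $G$ using exactly $k$ colors distinguishing.
   Context: A vertex coloring of $G$ is distinguishing if no non-identity automorphism of $G$ maps every vertex to a vertex of the same color. The distinguishing threshold $\theta(G)$ is the minimum number $k$ such that every vertex coloring of $G$ using exactly $k$ colors is distinguishing, and $\theta(G)=\infty$ if no finite such $k$ exists. Equivalently, $\theta(G)-1$ is the supremum of the number of cycles (fixed points counted as cycles) of non-identity automorphisms of $G$. *)

theory Defs
  imports Main "HOL-Library.Extended_Nat"
begin

definition simple_graph :: "'a set \<Rightarrow> ('a \<Rightarrow> 'a \<Rightarrow> bool) \<Rightarrow> bool" where
  "simple_graph V E \<longleftrightarrow>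
     (\<forall>u v. E u v \<longrightarrow> u \<in> V \<and> v \<in> V) \<and>
     (\<forall>u v. E u v \<longrightarrow> E v u) \<and>
     (\<forall>v. \<not> E v v)"

definition automorphism :: "'a set \<Rightarrow> ('a \<Rightarrow> 'a \<Rightarrow> bool) \<Rightarrow> ('a \<Rightarrow> 'a) \<Rightarrow> bool" where
  "automorphism V E f \<longleftrightarrow>
     bij_betw f V V \<and> (\<forall>u\<in>V. \<forall>v\<in>V. E u v \<longleftrightarrow> E (f u) (f v))"

definition non_identity_on :: "'a set \<Rightarrow> ('a \<Rightarrow> 'a) \<Rightarrow> bool" where
  "non_identity_on V f \<longleftrightarrow> (\<exists>v\<in>V. f v \<noteq> v)"

definition asymmetric :: "'a set \<Rightarrow> ('a \<Rightarrow> 'a \<Rightarrow> bool) \<Rightarrow> bool" where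
  "asymmetric V E \<longleftrightarrow> \<not> (\<exists>f. automorphism V E f \<and> non_identity_on V f)"

definition uses_exactly :: "'a set \<Rightarrow> ('a \<Rightarrow> nat) \<Rightarrow> nat \<Rightarrow> bool" where
  "uses_exactly V c k \<longleftrightarrow> finite (c ` V) \<and> card (c ` V) = k"

definition distinguishing :: "'a set \<Rightarrow> ('a \<Rightarrow> 'a \<Rightarrow> bool) \<Rightarrow> ('a \<Rightarrow> nat) \<Rightarrow> bool" where
  "distinguishing V E c \<longleftrightarrow>
     (\<forall>f. automorphism V E f \<and> non_identity_on V f \<longrightarrow> \<not> (\<forall>v\<in>V. c (f v) = c v))"

text \<open>Distinguishing threshold: least k \<ge> 1 such that every colouring with exactly k colours
  is distinguishing; \<infinity> if no such finite k exists (Inf of the empty set of enat is \<infinity>).\<close>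
definition dist_threshold :: "'a set \<Rightarrow> ('a \<Rightarrow> 'a \<Rightarrow> bool) \<Rightarrow> enat" where
  "dist_threshold V E =
     Inf (enat ` {k. k \<ge> 1 \<and> (\<forall>c. uses_exactly V c k \<longrightarrow> distinguishing V E c)})"

end

theory Submission
  imports Defs
begin

definition rel :: "('a \<Rightarrow> 'a) \<Rightarrow> 'a \<Rightarrow> 'a \<Rightarrow> bool" where
  "rel g z y \<longleftrightarrow> (\<exists>n. (g^^n) z = y \<or> (g^^n) y = z)"

lemma auto_comp:
  assumes "automorphism V E f" "automorphism V E g"
  shows "automorphism V E (f \<circ> g)"
proof -
  have "bij_betw (f \<circ> g) V V" using assms unfolding automorphism_def
    using bij_betw_trans by blast
  moreover have "\<forall>u\<in>V. \<forall>v\<in>V. E u v \<longleftrightarrow> E ((f\<circ>g) u) ((f\<circ>g) v)"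
  proof (intro ballI)
    fix u v assume uv: "u \<in> V" "v \<in> V"
    have gu: "g u \<in> V" "g v \<in> V" using assms(2) uv unfolding automorphism_def bij_betw_def by auto
    have "E u v \<longleftrightarrow> E (g u) (g v)" using assms(2) uv unfolding automorphism_def by blast
    also have "\<dots> \<longleftrightarrow> E (f (g u)) (f (g v))" using assms(1) gu unfolding automorphism_def by blast
    finally show "E u v \<longleftrightarrow> E ((f\<circ>g) u) ((f\<circ>g) v)" by simp
  qed
  ultimately show ?thesis unfolding automorphism_def by blast
qed

lemma auto_id: "automorphism V E id"
  unfolding automorphism_def by auto

lemma auto_pow: "automorphism V E f \<Longrightarrow> automorphism V E (f^^n)"
  by (induction n) (auto simp: auto_id auto_comp)

lemma auto_in: "automorphism V E f \<Longrightarrow> x \<in> V \<Longrightarrow> f x \<in> V"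
  unfolding automorphism_def bij_betw_def by auto

lemma auto_inj: "automorphism V E f \<Longrightarrow> inj_on f V"
  unfolding automorphism_def bij_betw_def by auto

lemma pow_in: "automorphism V E f \<Longrightarrow> x \<in> V \<Longrightarrow> (f^^n) x \<in> V"
  using auto_pow auto_in by metis

lemma rel_inv:
  assumes g: "automorphism V E g" and z: "z \<in> V" and y: "y \<in> V"
  shows "rel g z (g y) \<longleftrightarrow> rel g z y"
proof
  assume "rel g z y"
  then obtain n where "(g^^n) z = y \<or> (g^^n) y = z" unfolding rel_def by blast
  then show "rel g z (g y)"
  proof
    assume "(g^^n) z = y"
    then have "(g^^Suc n) z = g y" by simp
    then show ?thesis unfolding rel_def by blast
  next
    assume h: "(g^^n) y = z"
    show ?thesis
    proof (cases n)
      case 0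
      then have "(g^^1) z = g y" using h by simp
      then show ?thesis unfolding rel_def by blast
    next
      case (Suc m)
      then have "(g^^m) (g y) = z" using h by (simp only: funpow_Suc_right o_apply)
      then show ?thesis unfolding rel_def by blast
    qed
  qed
next
  assume "rel g z (g y)"
  then obtain n where "(g^^n) z = g y \<or> (g^^n) (g y) = z" unfolding rel_def by blast
  then show "rel g z y"
  proof
    assume h: "(g^^n) z = g y"
    show ?thesis
    proof (cases n)
      case 0
      then have "(g^^1) y = z" using h by simp
      then show ?thesis unfolding rel_def by blast
    next
      case (Suc m)
      then have e: "g ((g^^m) z) = g y" using h by (simp only: funpow.simps o_apply)
      have m: "(g^^m) z \<in> V" using pow_in[OF g z] .
      have "(g^^m) z = y" using inj_onD[OF auto_inj[OF g] e m y] .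
      then show ?thesis unfolding rel_def by blast
    qed
  next
    assume "(g^^n) (g y) = z"
    then have "(g^^Suc n) y = z" by (simp only: funpow_Suc_right o_apply)
    then show ?thesis unfolding rel_def by blast
  qed
qed

lemma rel_refl: "rel g z z"
  unfolding rel_def by (rule exI[of _ 0]) simp

lemma colouring:
  assumes g: "automorphism V E g" and ni: "non_identity_on V g"
    and X: "X \<subseteq> V" "finite X" "card X = k" "k \<ge> 1"
    and sep: "\<forall>z\<in>X. \<forall>z'\<in>X. rel g z z' \<longrightarrow> z = z'"
  shows "\<exists>c. uses_exactly V c k \<and> \<not> distinguishing V E c"
proof -
  obtain e where e: "bij_betw e X {0..<card X}" using ex_bij_betw_finite_nat X(2) by blast
  define c where "c y = (if \<exists>z\<in>X. rel g z y then e (SOME z. z\<in>X \<and> rel g z y) else 0)" for y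
  have inv: "c (g y) = c y" if y: "y \<in> V" for y
  proof -
    have "(\<lambda>z. z\<in>X \<and> rel g z (g y)) = (\<lambda>z. z\<in>X \<and> rel g z y)"
      using rel_inv[OF g _ y] X(1) by blast
    then show ?thesis unfolding c_def by (metis (mono_tags, lifting))
  qed
  have img: "c ` V = {0..<k}"
  proof
    show "c ` V \<subseteq> {0..<k}"
    proof
      fix w assume "w \<in> c ` V"
      then obtain y where w: "w = c y" by blast
      show "w \<in> {0..<k}"
      proof (cases "\<exists>z\<in>X. rel g z y")
        case True
        then have "(SOME z. z\<in>X \<and> rel g z y) \<in> X" by (metis (mono_tags, lifting) someI_ex)
        then show ?thesis using w True e X(3) unfolding c_def bij_betw_def by auto
      next
        case False then show ?thesis using w X(4) unfolding c_def by auto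
      qed
    qed
  next
    show "{0..<k} \<subseteq> c ` V"
    proof
      fix i assume "i \<in> {0..<k}"
      then have "i \<in> e ` X" using e X(3) unfolding bij_betw_def by auto
      then obtain z where z: "z \<in> X" "e z = i" by blast
      have "(SOME z'. z'\<in>X \<and> rel g z' z) = z"
        using sep z(1) rel_refl by (metis (mono_tags, lifting) someI_ex)
      moreover have "\<exists>z'\<in>X. rel g z' z" using z(1) rel_refl[of g z] by blast
      ultimately have "c z = i" unfolding c_def using z(2) by simp
      then show "i \<in> c ` V" using z X(1) by blast
    qed
  qed
  have "uses_exactly V c k" unfolding uses_exactly_def img by simp
  moreover have "\<not> distinguishing V E c" unfolding distinguishing_def using g ni inv by blast
  ultimately show ?thesis by blast
qed

lemma funpow_period:
  assumes "(f^^p) x = x" shows "(f^^(q*p + r)) x = (f^^r) x"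
proof (induction q)
  case 0 then show ?case by simp
next
  case (Suc q)
  have eq: "Suc q * p + r = (q*p + r) + p" by simp
  have "(f^^(Suc q * p + r)) x = (f^^(q*p + r)) ((f^^p) x)"
    by (simp only: eq funpow_add o_apply)
  then show ?case using Suc assms by simp
qed

definition orb :: "('a \<Rightarrow> 'a) \<Rightarrow> 'a \<Rightarrow> 'a set" where
  "orb f x = range (\<lambda>n. (f^^n) x)"

lemma orb_finite:
  assumes "p > 0" "(f^^p) x = x" shows "finite (orb f x)"
proof -
  have "orb f x \<subseteq> (\<lambda>n. (f^^n) x) ` {0..<p}"
  proof
    fix y assume "y \<in> orb f x"
    then obtain n where y: "y = (f^^n) x" unfolding orb_def by auto
    have "(f^^n) x = (f^^(n div p * p + n mod p)) x" by simp
    also have "\<dots> = (f^^(n mod p)) x" using funpow_period assms(2) by metis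
    finally show "y \<in> (\<lambda>n. (f^^n) x) ` {0..<p}" using y assms(1) by auto
  qed
  then show ?thesis using finite_subset by blast
qed

lemma orb_pow:
  assumes p: "p > 0" "(f^^p) y = y"
  shows "orb f ((f^^n) y) = orb f y"
proof
  show "orb f ((f^^n) y) \<subseteq> orb f y"
  proof
    fix w assume "w \<in> orb f ((f^^n) y)"
    then obtain m where w: "w = (f^^m) ((f^^n) y)" unfolding orb_def by auto
    then have "w = (f^^(m+n)) y" by (simp only: funpow_add o_apply)
    then show "w \<in> orb f y" unfolding orb_def by blast
  qed
next
  show "orb f y \<subseteq> orb f ((f^^n) y)"
  proof
    fix w assume "w \<in> orb f y"
    then obtain m where w: "w = (f^^m) y" unfolding orb_def by auto
    have "(f^^m) y = (f^^(n*p + m)) y" using funpow_period[OF p(2), of n m] by simp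
    also have "\<dots> = (f^^(m + n*p - n)) ((f^^n) y)"
    proof -
      have np: "n \<le> n*p" using p(1) by simp
      have eq: "n*p + m = (m + n*p - n) + n" using np by linarith
      show ?thesis by (simp only: eq funpow_add o_apply)
    qed
    finally show "w \<in> orb f ((f^^n) y)" unfolding orb_def using w by blast
  qed
qed

lemma case_periodic:
  assumes inf: "infinite V" and f: "automorphism V E f" and ni: "non_identity_on V f"
    and k: "k \<ge> 1" and per: "\<forall>x\<in>V. \<exists>p>0. (f^^p) x = x"
  shows "\<exists>c. uses_exactly V c k \<and> \<not> distinguishing V E c"
proof -
  have inforb: "infinite (orb f ` V)"
  proof
    assume fin: "finite (orb f ` V)"
    have finA: "finite A" if A: "A \<in> orb f ` V" for A
    proof -
      obtain x where x: "x \<in> V" "A = orb f x" using A by blast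
      obtain p where "p > 0" "(f^^p) x = x" using per x(1) by blast
      then show ?thesis using orb_finite x(2) by simp
    qed
    have fU: "finite (\<Union>(orb f ` V))" using finite_Union[OF fin finA] .
    have sub: "V \<subseteq> \<Union>(orb f ` V)"
    proof
      fix x assume xV: "x \<in> V"
      have "(f^^0) x = x" by simp
      then have "x \<in> orb f x" unfolding orb_def by (metis rangeI)
      then show "x \<in> \<Union>(orb f ` V)" using xV by blast
    qed
    have "finite V" using finite_subset[OF sub fU] .
    then show False using inf by contradiction
  qed
  obtain T where T: "T \<subseteq> orb f ` V" "finite T" "card T = k"
    using infinite_arbitrarily_large[OF inforb, of k] by (elim exE conjE) (rule that)
  define X where "X = inv_into V (orb f) ` T"
  have XV: "X \<subseteq> V" unfolding X_def using T(1) by (auto intro: inv_into_into)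
  have inj: "inj_on (inv_into V (orb f)) T" using T(1) by (rule inj_on_inv_into)
  have cX: "card X = k" unfolding X_def using card_image[OF inj] T(3) by simp
  have fX: "finite X" unfolding X_def using T(2) by simp
  have orbX: "\<forall>z\<in>X. \<forall>z'\<in>X. orb f z = orb f z' \<longrightarrow> z = z'"
  proof (intro ballI impI)
    fix z z' assume z: "z \<in> X" "z' \<in> X" "orb f z = orb f z'"
    obtain t where t: "t \<in> T" "z = inv_into V (orb f) t" using z(1) unfolding X_def by blast
    obtain t' where t': "t' \<in> T" "z' = inv_into V (orb f) t'" using z(2) unfolding X_def by blast
    have "orb f z = t" using t T(1) by (simp add: f_inv_into_f subset_iff)
    moreover have "orb f z' = t'" using t' T(1) by (simp add: f_inv_into_f subset_iff)
    ultimately show "z = z'" using z(3) t t' by simp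
  qed
  have sep: "\<forall>z\<in>X. \<forall>z'\<in>X. rel f z z' \<longrightarrow> z = z'"
  proof (intro ballI impI)
    fix z z' assume z: "z \<in> X" "z' \<in> X" "rel f z z'"
    then obtain n where n: "(f^^n) z = z' \<or> (f^^n) z' = z" unfolding rel_def by blast
    have "orb f z = orb f z'"
    proof (cases "(f^^n) z = z'")
      case True
      obtain p where "p > 0" "(f^^p) z = z" using per z(1) XV by blast
      then show ?thesis using orb_pow[of p f z n] True by simp
    next
      case False
      then have h: "(f^^n) z' = z" using n by simp
      obtain p where "p > 0" "(f^^p) z' = z'" using per z(2) XV by blast
      then show ?thesis using orb_pow[of p f z' n] h by simp
    qed
    then show "z = z'" using orbX z by blast
  qed
  show ?thesis using colouring[OF f ni XV fX cX k sep] .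
qed

lemma case_aperiodic:
  assumes f: "automorphism V E f" and x: "x \<in> V"
    and k: "k \<ge> 1" and ap: "\<forall>p>0. (f^^p) x \<noteq> x"
  shows "\<exists>c. uses_exactly V c k \<and> \<not> distinguishing V E c"
proof -
  have inj: "inj (\<lambda>n. (f^^n) x)"
  proof -
    have "a = b" if h: "(f^^a) x = (f^^b) x" for a b
    proof (rule ccontr)
      assume ne: "a \<noteq> b"
      have main: False if ab: "a' < b'" and h': "(f^^a') x = (f^^b') x" for a' b'
      proof -
        have eq: "b' = a' + (b' - a')" using ab by simp
        have "(f^^b') x = (f^^a') ((f^^(b'-a')) x)" by (subst eq) (simp only: funpow_add o_apply)
        then have "(f^^a') ((f^^(b'-a')) x) = (f^^a') x" using h' by simp
        moreover have "inj_on (f^^a') V" using auto_inj[OF auto_pow[OF f]] .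
        moreover have "(f^^(b'-a')) x \<in> V" using pow_in[OF f x] .
        ultimately have "(f^^(b'-a')) x = x" using x by (meson inj_onD)
        then show False using ap ab by simp
      qed
      show False
      proof (cases "a < b")
        case True then show ?thesis using main h by blast
      next
        case False then have "b < a" using ne by simp
        then show ?thesis using main[OF _ h[symmetric]] by blast
      qed
    qed
    then show ?thesis unfolding inj_def by blast
  qed
  define g where "g = f^^k"
  have g: "automorphism V E g" unfolding g_def using auto_pow[OF f] .
  have "(f^^k) x \<noteq> x" using ap k by simp
  then have ni: "non_identity_on V g" unfolding non_identity_on_def g_def using x by blast
  define X where "X = (\<lambda>i. (f^^i) x) ` {0..<k}"
  have XV: "X \<subseteq> V" unfolding X_def using pow_in[OF f x] by blast
  have fX: "finite X" unfolding X_def by simp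
  have cX: "card X = k" unfolding X_def using card_image[OF inj_on_subset[OF inj]] by simp
  have gpow: "(g^^n) ((f^^i) x) = (f^^(k*n + i)) x" for n i
    unfolding g_def by (simp only: funpow_mult funpow_add o_apply)
  have sep: "\<forall>z\<in>X. \<forall>z'\<in>X. rel g z z' \<longrightarrow> z = z'"
  proof (intro ballI impI)
    fix z z' assume z: "z \<in> X" "z' \<in> X" "rel g z z'"
    obtain i where i: "i < k" "z = (f^^i) x" using z(1) unfolding X_def by auto
    obtain j where j: "j < k" "z' = (f^^j) x" using z(2) unfolding X_def by auto
    obtain n where n: "(g^^n) z = z' \<or> (g^^n) z' = z" using z(3) unfolding rel_def by blast
    then have "(f^^(k*n + i)) x = (f^^j) x \<or> (f^^(k*n + j)) x = (f^^i) x"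
      using i(2) j(2) gpow by simp
    then have "k*n + i = j \<or> k*n + j = i" using injD[OF inj] by blast
    moreover have "n = 0" if "k*n + i = j \<or> k*n + j = i"
    proof (rule ccontr)
      assume "n \<noteq> 0" then have "k \<le> k*n" by simp
      then show False using that i j by linarith
    qed
    ultimately show "z = z'" using i j by auto
  qed
  show ?thesis using colouring[OF g ni XV fX cX k sep] .
qed

lemma nonasym:
  assumes inf: "infinite V" and f: "automorphism V E f" and ni: "non_identity_on V f"
    and k: "k \<ge> 1"
  shows "\<exists>c. uses_exactly V c k \<and> \<not> distinguishing V E c"
proof (cases "\<forall>x\<in>V. \<exists>p>0. (f^^p) x = x")
  case True then show ?thesis using case_periodic[OF inf f ni k] by blast
next
  case False
  then obtain x where "x \<in> V" "\<forall>p>0. (f^^p) x \<noteq> x" by blast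
  then show ?thesis using case_aperiodic[OF f _ k] by blast
qed

theorem mainTheorem8:
  fixes V :: "'a set" and E :: "'a \<Rightarrow> 'a \<Rightarrow> bool"
  assumes "simple_graph V E" and "infinite V"
  shows "(dist_threshold V E = 1 \<longleftrightarrow> asymmetric V E) \<and>
         (dist_threshold V E = 1 \<or> dist_threshold V E = \<infinity>)"
proof (cases "asymmetric V E")
  case True
  then have "\<forall>c. distinguishing V E c" unfolding asymmetric_def distinguishing_def by blast
  then have S: "{k. k \<ge> 1 \<and> (\<forall>c. uses_exactly V c k \<longrightarrow> distinguishing V E c)} = {k. k \<ge> 1}"
    by blast
  have "dist_threshold V E = 1"
  proof (rule antisym)
    show "dist_threshold V E \<le> 1" unfolding dist_threshold_def S
      by (rule Inf_lower) (simp add: one_enat_def image_iff)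
    show "1 \<le> dist_threshold V E" unfolding dist_threshold_def S
      by (rule Inf_greatest) (auto simp: one_enat_def)
  qed
  then show ?thesis using True by simp
next
  case False
  then obtain f where f: "automorphism V E f" "non_identity_on V f"
    unfolding asymmetric_def by blast
  have E0: "{k. k \<ge> 1 \<and> (\<forall>c. uses_exactly V c k \<longrightarrow> distinguishing V E c)} = {}"
    using nonasym[OF assms(2) f] by blast
  have "dist_threshold V E = \<infinity>" unfolding dist_threshold_def E0
    by (simp add: top_enat_def)
  then show ?thesis using False by simp
qed

end
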